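(* Let $X\sim\mathrm{TDL}(a,b,c,d)$ with admissible parameters, $a\neq0$ and $c\in(0,1)$, and let $\mu=E[X]$, $\sigma^2=\mathrm{Var}[X]$, $D=\sigma^2/\mu$. Then $$m_3:=E[(X-\mu)^3]=\frac{\sigma^4}{\mu}+d\mu\sigma^2+\frac{c(1-a)\mu}{(1-c)^2},$$ $$m_4:=E[(X-\mu)^4]=3(2d+1)\sigma^4+\frac{\big(4c(1-a)+(1-ac)^2\big)\sigma^2}{(1-c)^2}+\frac{c^2(1-a^2)\mu}{(1-c)^3}.$$ Consequently the skewness and kurtosis are $$\frac{m_3}{\sigma^3}=\frac{D}{\sigma}+\frac{d\sigma}{D}+\frac{c(1-a)}{(1-c)^2\sigma D},\qquad \frac{m_4}{\sigma^4}=3(2d+1)+\frac{4c(1-a)+(1-ac)^2}{(1-c)^2\sigma^2}+\frac{c^2(1-a^2)}{(1-c)^3\sigma^2 D}.$$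
   Context: $\operatorname{sgn}$ is the sign function with $\operatorname{sgn}(0)=0$. Tempered Discrete Linnik law $\mathrm{TDL}(a,b,c,d)$: the law on $\mathbb{N}$ with probability generating function $g(s)=\big(1+\operatorname{sgn}(a)\,b\,d\,((1-cs)^a-(1-c)^a)\big)^{-1/d}$, $s\in[0,1]$, with admissible parameters $d>0$, $b>0$, and either $a\le0$, $c\in[0,1)$, or $a\in(0,1]$, $c\in[0,1]$. Under the stated hypotheses $\mu=|a|\,b\,c\,(1-c)^{a-1}>0$. *)

theory Defs
  imports "HOL-Probability.Probability"
begin

definition TDL_pgf :: "real \<Rightarrow> real \<Rightarrow> real \<Rightarrow> real \<Rightarrow> real \<Rightarrow> real" where
  "TDL_pgf a b c d s =
     (1 + sgn a * b * d * ((1 - c * s) powr a - (1 - c) powr a)) powr (- 1 / d)"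

definition TDL_admissible :: "real \<Rightarrow> real \<Rightarrow> real \<Rightarrow> real \<Rightarrow> bool" where
  "TDL_admissible a b c d \<longleftrightarrow> d > 0 \<and> b > 0 \<and>
     ((a \<le> 0 \<and> 0 \<le> c \<and> c < 1) \<or> (0 < a \<and> a \<le> 1 \<and> 0 \<le> c \<and> c \<le> 1))"

definition is_TDL :: "nat pmf \<Rightarrow> real \<Rightarrow> real \<Rightarrow> real \<Rightarrow> real \<Rightarrow> bool" where
  "is_TDL P a b c d \<longleftrightarrow>
     (\<forall>s\<in>{0..1}. measure_pmf.expectation P (\<lambda>k. s ^ k) = TDL_pgf a b c d s)"

end

theory Submission
  imports Defs
begin


lemma pmf_integrable_iff:
  fixes P :: "nat pmf" and f :: "nat \<Rightarrow> real"
  shows "integrable (measure_pmf P) f \<longleftrightarrow> summable (\<lambda>k. \<bar>pmf P k * f k\<bar>)"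
  by (simp add: measure_pmf_eq_density integrable_density integrable_count_space_nat_iff pmf_nonneg)

lemma pmf_integral_eq:
  fixes P :: "nat pmf" and f :: "nat \<Rightarrow> real"
  assumes "summable (\<lambda>k. \<bar>pmf P k * f k\<bar>)"
  shows "measure_pmf.expectation P f = (\<Sum>k. pmf P k * f k)"
proof -
  have "measure_pmf.expectation P f = integral\<^sup>L (count_space UNIV) (\<lambda>k. pmf P k * f k)"
    by (simp add: measure_pmf_eq_density integral_density pmf_nonneg)
  also have "\<dots> = (\<Sum>k. pmf P k * f k)"
    using assms by (intro integral_count_space_nat) (simp add: integrable_count_space_nat_iff)
  finally show ?thesis .
qed

lemma pmf_summable: fixes P :: "nat pmf" shows "summable (pmf P)"
proof -
  have "integrable (measure_pmf P) (\<lambda>_. 1::real)" by simp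
  then show ?thesis unfolding pmf_integrable_iff by (simp add: pmf_nonneg)
qed

lemma pmf_deriv_eq:
  fixes F G F' G' :: "real \<Rightarrow> real"
  assumes "\<And>s. s \<in> {0<..<1} \<Longrightarrow> F s = G s"
    and "\<And>s. s \<in> {0<..<1} \<Longrightarrow> (F has_field_derivative F' s) (at s)"
    and "\<And>s. s \<in> {0<..<1} \<Longrightarrow> (G has_field_derivative G' s) (at s)"
    and "s \<in> {0<..<1}"
  shows "F' s = G' s"
proof -
  have "(G has_field_derivative F' s) (at s)"
    by (rule has_field_derivative_transform_within_open[OF assms(2)[OF assms(4)] _ assms(4)]) (use assms(1) in auto)
  then show ?thesis using assms(3)[OF assms(4)] DERIV_unique by blast
qed

lemma abel_nonneg:
  fixes c :: "nat \<Rightarrow> real" and g :: "real \<Rightarrow> real"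
  assumes eq: "\<And>s. s \<in> {0<..<1} \<Longrightarrow> (\<Sum>n. c n * s ^ n) = g s"
    and sm: "\<And>s. s \<in> {0<..<1} \<Longrightarrow> summable (\<lambda>n. c n * s ^ n)"
    and nn: "\<And>n. 0 \<le> c n"
    and cont: "isCont g 1"
  shows "c sums g 1"
proof -
  have lim: "(g \<longlongrightarrow> g 1) (at_left 1)"
    using cont by (simp add: isCont_def filterlim_at_split)
  have ev: "eventually (\<lambda>s. s \<in> {0<..<1}) (at_left (1::real))"
    by (rule eventually_at_left_real) simp
  have bound: "(\<Sum>i<N. c i) \<le> g 1" for N
  proof -
    have l2: "((\<lambda>s. \<Sum>i<N. c i * s ^ i) \<longlongrightarrow> (\<Sum>i<N. c i * 1 ^ i)) (at_left 1)"
      by (intro tendsto_intros)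
    have "eventually (\<lambda>s. (\<Sum>i<N. c i * s ^ i) \<le> g s) (at_left (1::real))"
      using ev
    proof eventually_elim
      case (elim s)
      then show ?case using sum_le_suminf[OF sm[OF elim], of "{..<N}"] eq[OF elim] nn elim
        by (auto intro!: mult_nonneg_nonneg)
    qed
    from tendsto_le[OF _ lim l2 this] show ?thesis by simp
  qed
  have sc: "summable c" by (rule summableI_nonneg_bounded[OF nn bound])
  have le1: "suminf c \<le> g 1" by (rule suminf_le_const[OF sc bound])
  have "eventually (\<lambda>s. g s \<le> suminf c) (at_left (1::real))"
    using ev
  proof eventually_elim
    case (elim s)
    have "(\<Sum>n. c n * s ^ n) \<le> suminf c"
      using elim nn by (intro suminf_le sm sc) (auto intro!: mult_left_le power_le_one)
    then show ?case using eq[OF elim] by simp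
  qed
  from tendsto_le[OF _ tendsto_const lim this] have "g 1 \<le> suminf c" by simp
  with le1 sc show ?thesis by (simp add: summable_sums_iff) 
qed



lemma diffs_iter_summable:
  fixes p :: "nat \<Rightarrow> real"
  assumes "\<And>z. \<bar>z\<bar> < 1 \<Longrightarrow> summable (\<lambda>n. p n * z ^ n)"
  shows "\<bar>z\<bar> < 1 \<Longrightarrow> summable (\<lambda>n. (diffs ^^ j) p n * z ^ n)"
proof (induction j arbitrary: z)
  case 0 then show ?case using assms by simp
next
  case (Suc j)
  show ?case using termdiff_converges[of z 1 "(diffs ^^ j) p"] Suc by simp
qed

lemma diffs_iter_deriv:
  fixes p :: "nat \<Rightarrow> real"
  assumes "\<And>z. \<bar>z\<bar> < 1 \<Longrightarrow> summable (\<lambda>n. p n * z ^ n)" "\<bar>z\<bar> < 1"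
  shows "((\<lambda>z. \<Sum>n. (diffs ^^ j) p n * z ^ n) has_field_derivative
           (\<Sum>n. (diffs ^^ Suc j) p n * z ^ n)) (at z)"
  using termdiffs_strong'[of 1 "(diffs ^^ j) p" z] diffs_iter_summable[OF assms(1)] assms(2) by simp

lemma diffs_iter_eq:
  fixes p :: "nat \<Rightarrow> real"
  shows "(diffs ^^ j) p n = p (n + j) * pochhammer (real n + 1) j"
proof (induction j arbitrary: n)
  case 0 then show ?case by simp
next
  case (Suc j)
  have "(diffs ^^ Suc j) p n = real (Suc n) * ((diffs ^^ j) p (Suc n))"
    by (simp add: diffs_def)
  also have "\<dots> = p (n + Suc j) * pochhammer (real n + 1) (Suc j)"
    using Suc by (simp add: pochhammer_rec algebra_simps)
  finally show ?case .
qed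

lemma diffs_iter_sums:
  fixes p :: "nat \<Rightarrow> real"
  assumes "(diffs ^^ j) p sums S"
  shows "(\<lambda>m. p m * pochhammer (real m - real j + 1) j) sums S"
proof -
  have z: "(\<Sum>i<j. p i * pochhammer (real i - real j + 1) j) = 0"
  proof (intro sum.neutral ballI)
    fix i assume "i \<in> {..<j}"
    then have "pochhammer (real i - real j + 1) j = 0"
      by (subst pochhammer_eq_0_iff) (auto intro!: exI[of _ "j - 1 - i"])
    then show "p i * pochhammer (real i - real j + 1) j = 0" by simp
  qed
  have "(\<lambda>i. p (i + j) * pochhammer (real (i + j) - real j + 1) j) sums S"
  proof -
    have "(diffs ^^ j) p = (\<lambda>i. p (i + j) * pochhammer (real (i + j) - real j + 1) j)"
      by (rule ext) (simp add: diffs_iter_eq add.commute)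
    then show ?thesis using assms by simp
  qed
  then show ?thesis using sums_iff_shift[of "\<lambda>m. p m * pochhammer (real m - real j + 1) j" j S] z by simp
qed

lemma poch4: "pochhammer (x::real) 4 = x * (x+1) * (x+2) * (x+3)"
  by (simp add: eval_nat_numeral pochhammer_Suc algebra_simps)



definition phi :: "real \<Rightarrow> real \<Rightarrow> real \<Rightarrow> real \<Rightarrow> real" where
  "phi B a c s = 1 + B * ((1 - c * s) powr a - (1 - c) powr a)"

definition ph :: "real \<Rightarrow> real \<Rightarrow> real \<Rightarrow> nat \<Rightarrow> real \<Rightarrow> real" where
  "ph B a c k s = B * pochhammer (a - real k + 1) k * (- c) ^ k * (1 - c * s) powr (a - real k)"

lemma d_ph:
  assumes "0 < 1 - c * s"
  shows "(ph B a c k has_field_derivative ph B a c (Suc k) s) (at s)"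
proof -
  have "((\<lambda>s. (1 - c * s) powr (a - real k)) has_field_derivative
          (a - real k) * (1 - c * s) powr (a - real k - of_nat 1) * (- c)) (at s)"
    by (rule DERIV_fun_powr) (use assms in \<open>auto intro!: derivative_eq_intros\<close>)
  then have d: "((\<lambda>s. B * pochhammer (a - real k + 1) k * (- c) ^ k * (1 - c * s) powr (a - real k)) has_field_derivative
          B * pochhammer (a - real k + 1) k * (- c) ^ k * ((a - real k) * (1 - c * s) powr (a - real k - of_nat 1) * (- c))) (at s)"
    by (rule DERIV_cmult)
  moreover have eq: "B * pochhammer (a - real k + 1) k * (- c) ^ k * ((a - real k) * (1 - c * s) powr (a - real k - of_nat 1) * (- c))
     = ph B a c (Suc k) s"
  proof -
    have "pochhammer (a - real (Suc k) + 1) (Suc k) = (a - real k) * pochhammer (a - real k + 1) k"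
      by (simp add: pochhammer_rec algebra_simps)
    moreover have "a - real (Suc k) = a - real k - of_nat 1" by simp
    ultimately show ?thesis unfolding ph_def by (simp only:) (simp add: algebra_simps)
  qed
  moreover have fe: "ph B a c k = (\<lambda>s. B * pochhammer (a - real k + 1) k * (- c) ^ k * (1 - c * s) powr (a - real k))"
    by (simp add: ph_def fun_eq_iff)
  show ?thesis unfolding fe using DERIV_cong[OF d eq] .
qed

lemma d_phi:
  assumes "0 < 1 - c * s"
  shows "(phi B a c has_field_derivative ph B a c 1 s) (at s)"
proof -
  have "(ph B a c 0 has_field_derivative ph B a c 1 s) (at s)" using d_ph[OF assms] by simp
  then have "((\<lambda>s. 1 - B * (1 - c) powr a + ph B a c 0 s) has_field_derivative ph B a c 1 s) (at s)"
    by (auto intro!: derivative_eq_intros)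
  moreover have "(\<lambda>s. 1 - B * (1 - c) powr a + ph B a c 0 s) = phi B a c"
    by (rule ext) (simp add: ph_def phi_def algebra_simps)
  ultimately show ?thesis by simp
qed

lemma d_Q:
  assumes "0 < 1 - c * s" "0 < phi B a c s"
  shows "((\<lambda>s. phi B a c s powr r) has_field_derivative r * phi B a c s powr (r - 1) * ph B a c 1 s) (at s)"
  using DERIV_fun_powr[OF d_phi[OF assms(1)] assms(2), of r] by simp

context fixes B a c r :: real begin

definition "G0 s = phi B a c s powr r"
definition "G1 s = r * phi B a c s powr (r - 1) * ph B a c 1 s"
definition "G2 s = r * (r - 1) * phi B a c s powr (r - 2) * ph B a c 1 s ^ 2
   + r * phi B a c s powr (r - 1) * ph B a c 2 s"
definition "G3 s = r * (r - 1) * (r - 2) * phi B a c s powr (r - 3) * ph B a c 1 s ^ 3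
   + 3 * r * (r - 1) * phi B a c s powr (r - 2) * ph B a c 1 s * ph B a c 2 s
   + r * phi B a c s powr (r - 1) * ph B a c 3 s"
definition "G4 s = r * (r - 1) * (r - 2) * (r - 3) * phi B a c s powr (r - 4) * ph B a c 1 s ^ 4
   + 6 * r * (r - 1) * (r - 2) * phi B a c s powr (r - 3) * ph B a c 1 s ^ 2 * ph B a c 2 s
   + 3 * r * (r - 1) * phi B a c s powr (r - 2) * ph B a c 2 s ^ 2
   + 4 * r * (r - 1) * phi B a c s powr (r - 2) * ph B a c 1 s * ph B a c 3 s
   + r * phi B a c s powr (r - 1) * ph B a c 4 s"

lemma dQ: assumes "0 < 1 - c * s" "0 < phi B a c s"
  shows "((\<lambda>s. phi B a c s powr (r - 1)) has_field_derivative (r - 1) * phi B a c s powr (r - 2) * ph B a c 1 s) (at s)"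
    "((\<lambda>s. phi B a c s powr (r - 2)) has_field_derivative (r - 2) * phi B a c s powr (r - 3) * ph B a c 1 s) (at s)"
    "((\<lambda>s. phi B a c s powr (r - 3)) has_field_derivative (r - 3) * phi B a c s powr (r - 4) * ph B a c 1 s) (at s)"
  using d_Q[OF assms, of "r - 1"] d_Q[OF assms, of "r - 2"] d_Q[OF assms, of "r - 3"]
  by (simp_all add: algebra_simps)

lemma dph: assumes "0 < 1 - c * s"
  shows "(ph B a c 1 has_field_derivative ph B a c 2 s) (at s)"
    "(ph B a c 2 has_field_derivative ph B a c 3 s) (at s)"
    "(ph B a c 3 has_field_derivative ph B a c 4 s) (at s)"
  using d_ph[OF assms, of B a 1] d_ph[OF assms, of B a 2] d_ph[OF assms, of B a 3]
  by (simp_all add: eval_nat_numeral)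

lemma dG0: assumes "0 < 1 - c * s" "0 < phi B a c s" shows "(G0 has_field_derivative G1 s) (at s)"
  unfolding G0_def[abs_def] G1_def using d_Q[OF assms] by simp

lemma dG1: assumes "0 < 1 - c * s" "0 < phi B a c s" shows "(G1 has_field_derivative G2 s) (at s)"
  unfolding G1_def[abs_def] G2_def
  apply (rule dQ[OF assms] dph[OF assms(1)] derivative_eq_intros refl)+
  apply (simp add: algebra_simps power2_eq_square)
  done

lemma dG2: assumes "0 < 1 - c * s" "0 < phi B a c s" shows "(G2 has_field_derivative G3 s) (at s)"
  unfolding G2_def[abs_def] G3_def
  apply (rule dQ[OF assms] dph[OF assms(1)] derivative_eq_intros refl)+
  apply (simp add: algebra_simps power2_eq_square power3_eq_cube)
  done

lemma dG3: assumes "0 < 1 - c * s" "0 < phi B a c s" shows "(G3 has_field_derivative G4 s) (at s)"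
  unfolding G3_def[abs_def] G4_def
  apply (rule dQ[OF assms] dph[OF assms(1)] derivative_eq_intros refl)+
  apply (simp add: algebra_simps power2_eq_square power3_eq_cube eval_nat_numeral)
  done

lemma cQ: assumes "0 < 1 - c * s" "0 < phi B a c s" shows "isCont (\<lambda>s. phi B a c s powr q) s"
  using DERIV_isCont[OF d_Q[OF assms]] .

lemma cph: assumes "0 < 1 - c * s" shows "isCont (ph B a c k) s"
  using DERIV_isCont[OF d_ph[OF assms]] .

lemma cG4: assumes "0 < 1 - c * s" "0 < phi B a c s" shows "isCont G4 s"
proof -
  note q = cQ[OF assms] and f = cph[OF assms(1)]
  show ?thesis unfolding G4_def[abs_def]
    by (intro isCont_add isCont_mult isCont_power continuous_const q f)
qed

end


lemma alg:
  fixes e x y a r f1 f2 f3 f4 g1 g2 g3 g4 mu E2 E3 E4 s2 :: real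
  assumes "e > 0" "x > 0" "y > 0" "a \<le> 1"
  assumes r_def: "r = - e"
    and f1_def: "f1 = - x * y" and f2_def: "f2 = x * (a - 1) * y ^ 2"
    and f3_def: "f3 = - x * (a - 1) * (a - 2) * y ^ 3" and f4_def: "f4 = x * (a - 1) * (a - 2) * (a - 3) * y ^ 4"
    and g1_def: "g1 = r * f1"
    and g2_def: "g2 = r * (r - 1) * f1 ^ 2 + r * f2"
    and g3_def: "g3 = r * (r - 1) * (r - 2) * f1 ^ 3 + 3 * r * (r - 1) * f1 * f2 + r * f3"
    and g4_def: "g4 = r * (r - 1) * (r - 2) * (r - 3) * f1 ^ 4 + 6 * r * (r - 1) * (r - 2) * f1 ^ 2 * f2
       + 3 * r * (r - 1) * f2 ^ 2 + 4 * r * (r - 1) * f1 * f3 + r * f4"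
    and mu_def: "mu = g1" and E2_def: "E2 = g2 + g1" and E3_def: "E3 = g3 + 3 * g2 + g1"
    and E4_def: "E4 = g4 + 6 * g3 + 7 * g2 + g1"
    and s2_def: "s2 = E2 - mu ^ 2"
  shows "E3 - 3 * mu * E2 + 2 * mu ^ 3 = s2 ^ 2 / mu + (1 / e) * mu * s2 + y * (1 + y) * (1 - a) * mu"
    "E4 - 4 * mu * E3 + 6 * mu ^ 2 * E2 - 3 * mu ^ 4 = 3 * (2 * (1/e) + 1) * s2 ^ 2
       + (4 * y * (1 + y) * (1 - a) + (1 + y - a * y) ^ 2) * s2 + y ^ 2 * (1 + y) * (1 - a ^ 2) * mu"
    "mu > 0" "s2 > 0"
proof -
  have mu: "mu = e * x * y" unfolding mu_def g1_def r_def f1_def by simp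
  have s2: "s2 = e * x * y * (x * y + (1 - a) * y + 1)"
    unfolding s2_def E2_def mu_def g1_def g2_def r_def f1_def f2_def by (simp add: algebra_simps power2_eq_square)
  show "E3 - 3 * mu * E2 + 2 * mu ^ 3 = s2 ^ 2 / mu + (1 / e) * mu * s2 + y * (1 + y) * (1 - a) * mu"
    unfolding s2 mu unfolding E3_def E2_def mu_def g1_def g2_def g3_def r_def f1_def f2_def f3_def
    using assms(1-3) by (simp add: field_simps power2_eq_square power3_eq_cube)
  show "E4 - 4 * mu * E3 + 6 * mu ^ 2 * E2 - 3 * mu ^ 4 = 3 * (2 * (1/e) + 1) * s2 ^ 2
       + (4 * y * (1 + y) * (1 - a) + (1 + y - a * y) ^ 2) * s2 + y ^ 2 * (1 + y) * (1 - a ^ 2) * mu"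
    unfolding s2 mu unfolding E4_def E3_def E2_def mu_def g1_def g2_def g3_def g4_def r_def f1_def f2_def f3_def f4_def
    using assms(1-3) by (simp add: field_simps power2_eq_square power3_eq_cube eval_nat_numeral)
  show "mu > 0" unfolding mu using assms by simp
  have "x * y + (1 - a) * y + 1 > 0" using assms by (intro add_pos_pos add_pos_nonneg) auto
  then show "s2 > 0" unfolding s2 using assms by simp
qed

lemma yconv:
  fixes c a s2 mu :: real
  assumes "0 < c" "c < 1"
  defines "y \<equiv> c / (1 - c)"
  shows "y * (1 + y) * (1 - a) * mu = c * (1 - a) * mu / (1 - c) ^ 2"
    "(4 * y * (1 + y) * (1 - a) + (1 + y - a * y) ^ 2) * s2 = (4 * c * (1 - a) + (1 - a * c) ^ 2) * s2 / (1 - c) ^ 2"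
    "y ^ 2 * (1 + y) * (1 - a ^ 2) * mu = c ^ 2 * (1 - a ^ 2) * mu / (1 - c) ^ 3"
proof -
  have c: "1 - c \<noteq> 0" using assms by simp
  have y1: "1 + y = 1 / (1 - c)" using c by (simp add: y_def field_simps)
  show "y * (1 + y) * (1 - a) * mu = c * (1 - a) * mu / (1 - c) ^ 2"
    unfolding y1 by (simp add: y_def power2_eq_square)
  have h: "1 + y - a * y = (1 - a * c) / (1 - c)" using c by (simp add: y_def field_simps)
  have h2: "4 * y * (1 + y) * (1 - a) = 4 * c * (1 - a) / (1 - c) ^ 2"
    unfolding y1 by (simp add: y_def power2_eq_square)
  show "(4 * y * (1 + y) * (1 - a) + (1 + y - a * y) ^ 2) * s2 = (4 * c * (1 - a) + (1 - a * c) ^ 2) * s2 / (1 - c) ^ 2"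
    unfolding h h2 using c by (simp add: field_simps)
  show "y ^ 2 * (1 + y) * (1 - a ^ 2) * mu = c ^ 2 * (1 - a ^ 2) * mu / (1 - c) ^ 3"
    unfolding y1 by (simp add: y_def power2_eq_square power3_eq_cube power_divide)
qed


lemma ph_at1:
  assumes "0 < c" "c < 1"
  shows "ph B a c k 1 = B * (1 - c) powr a * pochhammer (a - real k + 1) k * (- (c / (1 - c))) ^ k"
proof -
  have e: "(1 - c) powr (a - real k) = (1 - c) powr a / (1 - c) ^ k"
    using assms by (simp add: powr_diff powr_realpow)
  have f: "(- (c / (1 - c))) ^ k = (- c) ^ k / (1 - c) ^ k"
    by (simp only: minus_divide_left power_divide)
  show ?thesis unfolding ph_def f by (simp add: e)
qed

lemma skew_alg:
  fixes t mu w d Z :: real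
  assumes "t > 0" "mu > 0" "w \<noteq> 0"
  shows "((t ^ 2) ^ 2 / mu + d * mu * t ^ 2 + Z * mu / w ^ 2) / t ^ 3
     = (t ^ 2 / mu) / t + d * t / (t ^ 2 / mu) + Z / (w ^ 2 * t * (t ^ 2 / mu))"
proof -
  have t3: "t ^ 3 = t * t ^ 2" by (simp add: power2_eq_square power3_eq_cube)
  have 1: "(t ^ 2) ^ 2 / mu / t ^ 3 = (t ^ 2 / mu) / t"
    using assms unfolding t3 by (simp add: power2_eq_square)
  have 2: "d * mu * t ^ 2 / t ^ 3 = d * t / (t ^ 2 / mu)"
    using assms unfolding t3 by (simp add: power2_eq_square)
  have 3: "Z * mu / w ^ 2 / t ^ 3 = Z / (w ^ 2 * t * (t ^ 2 / mu))"
    using assms unfolding t3 by (simp add: power2_eq_square)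
  show ?thesis unfolding add_divide_distrib 1 2 3 ..
qed

lemma kurt_alg:
  fixes t mu w d X Y :: real
  assumes "t > 0" "mu > 0" "w \<noteq> 0"
  shows "(3 * (2 * d + 1) * (t ^ 2) ^ 2 + X * t ^ 2 / w ^ 2 + Y * mu / w ^ 3) / t ^ 4
     = 3 * (2 * d + 1) + X / (w ^ 2 * t ^ 2) + Y / (w ^ 3 * t ^ 2 * (t ^ 2 / mu))"
proof -
  define u where "u = t ^ 2"
  have u0: "u > 0" using assms by (simp add: u_def)
  have t4: "t ^ 4 = u * u" by (simp add: u_def power2_eq_square eval_nat_numeral)
  have 1: "3 * (2 * d + 1) * u ^ 2 / (u * u) = 3 * (2 * d + 1)"
    using u0 by (simp add: power2_eq_square)
  have 2: "X * u / w ^ 2 / (u * u) = X / (w ^ 2 * u)"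
    using u0 by simp
  have 3: "Y * mu / w ^ 3 / (u * u) = Y / (w ^ 3 * u * (u / mu))"
    using u0 assms by simp
  show ?thesis unfolding u_def[symmetric] t4 add_divide_distrib 1 2 3 ..
qed

theorem mainTheorem7:
  fixes P :: "nat pmf" and a b c d :: real
  assumes adm: "TDL_admissible a b c d"
    and law: "is_TDL P a b c d"
    and a0: "a \<noteq> 0"
    and c0: "0 < c" and c1: "c < 1"
  defines "\<mu> \<equiv> measure_pmf.expectation P (\<lambda>k. real k)"
    and "\<sigma>2 \<equiv> measure_pmf.variance P (\<lambda>k. real k)"
    and "D \<equiv> measure_pmf.variance P (\<lambda>k. real k) / measure_pmf.expectation P (\<lambda>k. real k)"
    and "m3 \<equiv> measure_pmf.expectation P (\<lambda>k. (real k - measure_pmf.expectation P (\<lambda>k. real k)) ^ 3)"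
    and "m4 \<equiv> measure_pmf.expectation P (\<lambda>k. (real k - measure_pmf.expectation P (\<lambda>k. real k)) ^ 4)"
  shows "integrable (measure_pmf P) (\<lambda>k. real k ^ 4)
    \<and> m3 = \<sigma>2 ^ 2 / \<mu> + d * \<mu> * \<sigma>2 + c * (1 - a) * \<mu> / (1 - c) ^ 2
    \<and> m4 = 3 * (2 * d + 1) * \<sigma>2 ^ 2
              + (4 * c * (1 - a) + (1 - a * c) ^ 2) * \<sigma>2 / (1 - c) ^ 2
              + c ^ 2 * (1 - a ^ 2) * \<mu> / (1 - c) ^ 3
    \<and> m3 / sqrt \<sigma>2 ^ 3 = D / sqrt \<sigma>2 + d * sqrt \<sigma>2 / D
              + c * (1 - a) / ((1 - c) ^ 2 * sqrt \<sigma>2 * D)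
    \<and> m4 / sqrt \<sigma>2 ^ 4 = 3 * (2 * d + 1)
              + (4 * c * (1 - a) + (1 - a * c) ^ 2) / ((1 - c) ^ 2 * \<sigma>2)
              + c ^ 2 * (1 - a ^ 2) / ((1 - c) ^ 3 * \<sigma>2 * D)"
proof -
  define p where "p = pmf P"
  define B where "B = sgn a * b * d"
  define r where "r = - 1 / d"
  have d0: "d > 0" and b0: "b > 0" and a1: "a \<le> 1" using adm by (auto simp: TDL_admissible_def)
  have pn: "0 \<le> p n" for n unfolding p_def by (rule pmf_nonneg)
  have psum: "summable p" unfolding p_def by (rule pmf_summable)
  have phi_ge: "phi B a c s \<ge> 1" if "0 \<le> s" "s \<le> 1" for s
  proof -
    have cs: "c * s \<le> c" using that c0 by (simp add: mult_left_le)
    show ?thesis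
    proof (cases "a > 0")
      case True
      have "(1 - c) powr a \<le> (1 - c * s) powr a" using cs c1 True by (intro powr_mono2) auto
      moreover have "B = b * d" using True by (simp add: B_def)
      ultimately show ?thesis unfolding phi_def using b0 d0 by simp
    next
      case False
      then have an: "a < 0" using a0 by simp
      have "(1 - c * s) powr a \<le> (1 - c) powr a" using cs c1 an by (intro powr_mono2') auto
      moreover have "B = - (b * d)" using an by (simp add: B_def)
      ultimately show ?thesis unfolding phi_def using b0 d0 by (simp add: mult_nonneg_nonpos)
    qed
  qed
  have phi1: "phi B a c 1 = 1" by (simp add: phi_def)
  have pos1: "0 < 1 - c * s" "0 < phi B a c s" if "0 \<le> s" "s \<le> 1" for s
    using that phi_ge[OF that] c1 c0 by (auto intro: le_less_trans[of "c * s" c 1] simp: mult_left_le)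
  have smz: "summable (\<lambda>n. p n * z ^ n)" if "\<bar>z\<bar> < 1" for z :: real
  proof (rule summable_comparison_test[OF _ psum])
    show "\<exists>N. \<forall>n\<ge>N. norm (p n * z ^ n) \<le> p n"
      using that pn by (auto simp: abs_mult power_abs intro!: mult_left_le power_le_one)
  qed
  define F where "F j s = (\<Sum>n. (diffs ^^ j) p n * s ^ n)" for j s
  have FG0: "F 0 s = G0 B a c r s" if "s \<in> {0<..<1}" for s
  proof -
    have s: "s \<in> {0..1}" using that by auto
    have sab: "summable (\<lambda>k. \<bar>pmf P k * s ^ k\<bar>)"
      using smz[of s] that pn unfolding p_def by (simp add: abs_mult)
    have "G0 B a c r s = TDL_pgf a b c d s"
      unfolding G0_def TDL_pgf_def phi_def B_def r_def by simp
    also have "\<dots> = measure_pmf.expectation P (\<lambda>k. s ^ k)" using law s unfolding is_TDL_def by simp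
    also have "\<dots> = (\<Sum>k. pmf P k * s ^ k)" by (rule pmf_integral_eq[OF sab])
    finally show ?thesis unfolding F_def p_def by simp
  qed
  have dF: "(F j has_field_derivative F (Suc j) s) (at s)" if "s \<in> {0<..<1}" for j s
    unfolding F_def using diffs_iter_deriv[OF smz, of s j] that by simp
  have in01: "0 \<le> s" "s \<le> 1" if "s \<in> {0<..<1}" for s :: real using that by auto
  have pos01: "0 < 1 - c * s" "0 < phi B a c s" if "s \<in> {0<..<1}" for s :: real
    using pos1[of s] that by auto
  have FG1: "F 1 s = G1 B a c r s" if "s \<in> {0<..<1}" for s
    using pmf_deriv_eq[OF FG0 dF dG0[OF pos01] that] by simp
  have FG2: "F 2 s = G2 B a c r s" if "s \<in> {0<..<1}" for s
    using pmf_deriv_eq[OF FG1 dF dG1[OF pos01] that] by (simp add: numeral_2_eq_2)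
  have FG3: "F 3 s = G3 B a c r s" if "s \<in> {0<..<1}" for s
    using pmf_deriv_eq[OF FG2 dF dG2[OF pos01] that] by (simp add: numeral_3_eq_3 numeral_2_eq_2)
  have FG4: "F 4 s = G4 B a c r s" if "s \<in> {0<..<1}" for s
    using pmf_deriv_eq[OF FG3 dF dG3[OF pos01] that] by (simp add: eval_nat_numeral)
  have nn: "0 \<le> (diffs ^^ j) p n" for j n
    unfolding diffs_iter_eq using pn by (simp add: pochhammer_nonneg)
  have smj: "summable (\<lambda>n. (diffs ^^ j) p n * s ^ n)" if "s \<in> {0<..<1}" for j s
    using diffs_iter_summable[OF smz, of s j] that by simp
  have p1: "0 \<le> (1::real)" "(1::real) \<le> 1" by auto
  have S1: "(diffs ^^ 1) p sums G1 B a c r 1"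
    by (rule abel_nonneg[OF _ smj nn DERIV_isCont[OF dG1[OF pos1[OF p1]]]]) (use FG1 in \<open>simp add: F_def\<close>)
  have S2: "(diffs ^^ 2) p sums G2 B a c r 1"
    by (rule abel_nonneg[OF _ smj nn DERIV_isCont[OF dG2[OF pos1[OF p1]]]]) (use FG2 in \<open>simp add: F_def\<close>)
  have S3: "(diffs ^^ 3) p sums G3 B a c r 1"
    by (rule abel_nonneg[OF _ smj nn DERIV_isCont[OF dG3[OF pos1[OF p1]]]]) (use FG3 in \<open>simp add: F_def\<close>)
  have S4: "(diffs ^^ 4) p sums G4 B a c r 1"
    by (rule abel_nonneg[OF _ smj nn cG4[OF pos1[OF p1]]]) (use FG4 in \<open>simp add: F_def\<close>)
  define g1 where "g1 = G1 B a c r 1"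
  define g2 where "g2 = G2 B a c r 1"
  define g3 where "g3 = G3 B a c r 1"
  define g4 where "g4 = G4 B a c r 1"
  have T1: "(\<lambda>m. p m * real m) sums g1"
    using diffs_iter_sums[OF S1] unfolding g1_def by simp
  have T2: "(\<lambda>m. p m * (real m * (real m - 1))) sums g2"
    using diffs_iter_sums[OF S2] unfolding g2_def by (simp add: eval_nat_numeral pochhammer_Suc algebra_simps)
  have T3: "(\<lambda>m. p m * (real m * (real m - 1) * (real m - 2))) sums g3"
    using diffs_iter_sums[OF S3] unfolding g3_def by (simp add: eval_nat_numeral pochhammer_Suc algebra_simps)
  have T4: "(\<lambda>m. p m * (real m * (real m - 1) * (real m - 2) * (real m - 3))) sums g4"
    using diffs_iter_sums[OF S4] unfolding g4_def by (simp add: eval_nat_numeral pochhammer_Suc algebra_simps)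
  have M2: "(\<lambda>m. p m * real m ^ 2) sums (g2 + g1)"
    using sums_add[OF T2 T1] by (simp add: algebra_simps power2_eq_square)
  have M3: "(\<lambda>m. p m * real m ^ 3) sums (g3 + 3 * g2 + g1)"
    using sums_add[OF sums_add[OF T3 sums_mult[OF T2, of 3]] T1] by (simp add: algebra_simps power3_eq_cube)
  have M4: "(\<lambda>m. p m * real m ^ 4) sums (g4 + 6 * g3 + 7 * g2 + g1)"
    using sums_add[OF sums_add[OF sums_add[OF T4 sums_mult[OF T3, of 6]] sums_mult[OF T2, of 7]] T1]
    by (simp add: algebra_simps eval_nat_numeral)
  have M0: "p sums 1"
  proof -
    have "measure_pmf.expectation P (\<lambda>_. 1::real) = (\<Sum>k. pmf P k * 1)"
      by (rule pmf_integral_eq) (use psum pn in \<open>simp add: p_def\<close>)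
    then show ?thesis using psum by (simp add: p_def summable_sums_iff)
  qed
  have EM: "integrable (measure_pmf P) (\<lambda>k. real k ^ j) \<and> measure_pmf.expectation P (\<lambda>k. real k ^ j) = v"
    if "(\<lambda>m. p m * real m ^ j) sums v" for j v
  proof -
    have sa: "summable (\<lambda>k. \<bar>pmf P k * real k ^ j\<bar>)"
      using that pn unfolding p_def by (simp add: abs_mult sums_iff)
    show ?thesis using pmf_integrable_iff[of P] pmf_integral_eq[OF sa] sa that
      unfolding p_def by (simp add: sums_iff)
  qed
  have T1': "(\<lambda>m. p m * real m ^ 1) sums g1" using T1 by simp
  note E1 = EM[OF T1'] and E2 = EM[OF M2] and E3 = EM[OF M3] and E4 = EM[OF M4]
  have I1: "integrable (measure_pmf P) (\<lambda>k. real k)" using E1 by simp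
  have mu: "\<mu> = g1" unfolding \<mu>_def using E1 by simp
  have int_poly: "measure_pmf.expectation P (\<lambda>k. u0 + u1 * real k + u2 * real k ^ 2 + u3 * real k ^ 3 + u4 * real k ^ 4)
      = u0 + u1 * g1 + u2 * (g2 + g1) + u3 * (g3 + 3 * g2 + g1) + u4 * (g4 + 6 * g3 + 7 * g2 + g1)" for u0 u1 u2 u3 u4
    using E1 E2 E3 E4 I1 by simp
  have sig: "\<sigma>2 = (g2 + g1) - g1 ^ 2"
  proof -
    have "\<sigma>2 = measure_pmf.expectation P (\<lambda>k. g1 ^ 2 + (- 2 * g1) * real k + 1 * real k ^ 2 + 0 * real k ^ 3 + 0 * real k ^ 4)"
      unfolding \<sigma>2_def mu[unfolded \<mu>_def] by (intro Bochner_Integration.integral_cong) (auto simp: power2_eq_square algebra_simps)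
    then show ?thesis unfolding int_poly by (simp add: power2_eq_square algebra_simps)
  qed
  have m3: "m3 = (g3 + 3 * g2 + g1) - 3 * g1 * (g2 + g1) + 2 * g1 ^ 3"
  proof -
    have "m3 = measure_pmf.expectation P (\<lambda>k. (- (g1 ^ 3)) + (3 * g1 ^ 2) * real k + (- 3 * g1) * real k ^ 2 + 1 * real k ^ 3 + 0 * real k ^ 4)"
      unfolding m3_def mu[unfolded \<mu>_def] by (intro Bochner_Integration.integral_cong) (auto simp: power3_eq_cube power2_eq_square algebra_simps)
    then show ?thesis unfolding int_poly by (simp add: power3_eq_cube power2_eq_square algebra_simps)
  qed
  have m4: "m4 = (g4 + 6 * g3 + 7 * g2 + g1) - 4 * g1 * (g3 + 3 * g2 + g1) + 6 * g1 ^ 2 * (g2 + g1) - 3 * g1 ^ 4"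
  proof -
    have "m4 = measure_pmf.expectation P (\<lambda>k. g1 ^ 4 + (- 4 * g1 ^ 3) * real k + (6 * g1 ^ 2) * real k ^ 2 + (- 4 * g1) * real k ^ 3 + 1 * real k ^ 4)"
      unfolding m4_def mu[unfolded \<mu>_def] by (intro Bochner_Integration.integral_cong) (auto simp: eval_nat_numeral algebra_simps)
    then show ?thesis unfolding int_poly by (simp add: eval_nat_numeral algebra_simps)
  qed
  define x where "x = B * (1 - c) powr a * a"
  define y where "y = c / (1 - c)"
  define e where "e = 1 / d"
  have x0: "x > 0"
  proof -
    have "sgn a * a > 0" using a0 by (cases "a > 0") auto
    then show ?thesis unfolding x_def B_def using b0 d0 c1
      by (metis (no_types, lifting) mult.commute mult.left_commute mult_pos_pos powr_gt_zero diff_gt_0_iff_gt less_numeral_extra(3))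
  qed
  have y0: "y > 0" using c0 c1 by (simp add: y_def)
  have e0: "e > 0" using d0 by (simp add: e_def)
  have f1: "ph B a c 1 1 = - x * y" unfolding ph_at1[OF c0 c1] x_def y_def by simp
  have f2: "ph B a c 2 1 = x * (a - 1) * y ^ 2"
    unfolding ph_at1[OF c0 c1] x_def y_def by (simp add: eval_nat_numeral pochhammer_Suc algebra_simps)
  have f3: "ph B a c 3 1 = - x * (a - 1) * (a - 2) * y ^ 3"
    unfolding ph_at1[OF c0 c1] x_def y_def by (simp add: eval_nat_numeral pochhammer_Suc algebra_simps)
  have f4: "ph B a c 4 1 = x * (a - 1) * (a - 2) * (a - 3) * y ^ 4"
    unfolding ph_at1[OF c0 c1] x_def y_def by (simp add: eval_nat_numeral pochhammer_Suc algebra_simps)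
  have re: "r = - e" unfolding r_def e_def by simp
  note A = alg[OF e0 x0 y0 a1 re refl refl refl refl, of g1 g2 g3 g4 g1 "g2 + g1" "g3 + 3 * g2 + g1"
      "g4 + 6 * g3 + 7 * g2 + g1" "(g2 + g1) - g1 ^ 2"]
  have A': "m3 = \<sigma>2 ^ 2 / \<mu> + (1 / e) * \<mu> * \<sigma>2 + y * (1 + y) * (1 - a) * \<mu>"
     "m4 = 3 * (2 * (1/e) + 1) * \<sigma>2 ^ 2
       + (4 * y * (1 + y) * (1 - a) + (1 + y - a * y) ^ 2) * \<sigma>2 + y ^ 2 * (1 + y) * (1 - a ^ 2) * \<mu>"
     "\<mu> > 0" "\<sigma>2 > 0"
    unfolding m3 m4 sig mu
    by (rule A; (unfold g1_def g2_def g3_def g4_def G1_def G2_def G3_def G4_def phi1 f1 f2 f3 f4)?; simp)+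
  have de: "1 / e = d" by (simp add: e_def)
  have m3f: "m3 = \<sigma>2 ^ 2 / \<mu> + d * \<mu> * \<sigma>2 + c * (1 - a) * \<mu> / (1 - c) ^ 2"
    using A'(1) unfolding de y_def yconv[OF c0 c1] .
  have m4f: "m4 = 3 * (2 * d + 1) * \<sigma>2 ^ 2
              + (4 * c * (1 - a) + (1 - a * c) ^ 2) * \<sigma>2 / (1 - c) ^ 2
              + c ^ 2 * (1 - a ^ 2) * \<mu> / (1 - c) ^ 3"
    using A'(2) unfolding de y_def yconv[OF c0 c1] .
  have Dd: "D = \<sigma>2 / \<mu>" unfolding D_def \<sigma>2_def \<mu>_def ..
  define t where "t = sqrt \<sigma>2"
  have t0: "t > 0" using A'(4) by (simp add: t_def)
  have tt: "\<sigma>2 = t ^ 2" using A'(4) by (simp add: t_def)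
  have mu0: "\<mu> > 0" by (rule A'(3))
  have c1': "1 - c \<noteq> 0" using c1 by simp
  have sk: "m3 / t ^ 3 = D / t + d * t / D + c * (1 - a) / ((1 - c) ^ 2 * t * D)"
    unfolding m3f Dd tt by (rule skew_alg[OF t0 mu0 c1'])
  have ku: "m4 / t ^ 4 = 3 * (2 * d + 1)
              + (4 * c * (1 - a) + (1 - a * c) ^ 2) / ((1 - c) ^ 2 * \<sigma>2)
              + c ^ 2 * (1 - a ^ 2) / ((1 - c) ^ 3 * \<sigma>2 * D)"
    unfolding m4f Dd tt by (rule kurt_alg[OF t0 mu0 c1'])
  have int4: "integrable (measure_pmf P) (\<lambda>k. real k ^ 4)" using E4 by simp
  have sk': "m3 / sqrt \<sigma>2 ^ 3 = D / sqrt \<sigma>2 + d * sqrt \<sigma>2 / D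
              + c * (1 - a) / ((1 - c) ^ 2 * sqrt \<sigma>2 * D)" using sk unfolding t_def .
  have ku': "m4 / sqrt \<sigma>2 ^ 4 = 3 * (2 * d + 1)
              + (4 * c * (1 - a) + (1 - a * c) ^ 2) / ((1 - c) ^ 2 * \<sigma>2)
              + c ^ 2 * (1 - a ^ 2) / ((1 - c) ^ 3 * \<sigma>2 * D)" using ku unfolding t_def .
  show ?thesis by (intro conjI int4 m3f m4f sk' ku')
qed

end
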